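(* Let $\gamma>0$, $0<q<1$, and for $\lambda\ge0$ define $f_\lambda(x;\mu)=d(x;\mu)-I(\mu)-\lambda(x^2-\gamma)$. Then $\mu_0\in\Lambda(\gamma,q)$ maximizes $I(\mu)$ over $\Lambda(\gamma,q)$ if and only if there exists $\lambda\ge0$ such that $\lambda\,\mathbb{E}_{\mu_0}[X^2-\gamma]=0$ and $\mathbb{E}_\mu[f_\lambda(X;\mu_0)]\le0$ for all $\mu\in\Lambda(q)$.
   Context: $\phi(t)=\frac{1}{\sqrt{2\pi}}e^{-t^2/2}$; $p_Y(y;\mu)=\mathbb{E}_\mu[\phi(y-X)]$; $d(x;\mu)=\int\phi(y-x)\log\frac{\phi(y-x)}{p_Y(y;\mu)}dy$; $I(\mu)=\int d(x;\mu)\mu(dx)$. $\Lambda(\gamma,q)=\{\mu:\mu(\{0\})\ge q,\ \mathbb{E}_\mu[X^2]\le\gamma\}$ and $\Lambda(q)=\bigcup_{0\le\gamma<\infty}\Lambda(\gamma,q)$. *)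

theory Defs
  imports "HOL-Probability.Probability"
begin

definition phi :: "real \<Rightarrow> real" where
  "phi t = exp (- (t\<^sup>2) / 2) / sqrt (2 * pi)"

definition real_prob :: "real measure \<Rightarrow> bool" where
  "real_prob \<mu> \<longleftrightarrow> prob_space \<mu> \<and> sets \<mu> = sets borel"

definition pY :: "real \<Rightarrow> real measure \<Rightarrow> real" where
  "pY y \<mu> = (\<integral>x. phi (y - x) \<partial>\<mu>)"

definition dfun :: "real \<Rightarrow> real measure \<Rightarrow> real" where
  "dfun x \<mu> = (\<integral>y. phi (y - x) * ln (phi (y - x) / pY y \<mu>) \<partial>lborel)"

definition Ifun :: "real measure \<Rightarrow> real" where
  "Ifun \<mu> = (\<integral>x. dfun x \<mu> \<partial>\<mu>)"

definition Lambda :: "real \<Rightarrow> real \<Rightarrow> real measure set" where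
  "Lambda \<gamma> q = {\<mu>. real_prob \<mu> \<and> measure \<mu> {0} \<ge> q \<and>
                     (\<integral>\<^sup>+ x. ennreal (x\<^sup>2) \<partial>\<mu>) \<le> ennreal \<gamma>}"

definition Lambda_q :: "real \<Rightarrow> real measure set" where
  "Lambda_q q = (\<Union>\<gamma>\<in>{0..}. Lambda \<gamma> q)"

definition f_lam :: "real \<Rightarrow> real \<Rightarrow> real \<Rightarrow> real measure \<Rightarrow> real" where
  "f_lam lam \<gamma> x \<mu> = dfun x \<mu> - Ifun \<mu> - lam * (x\<^sup>2 - \<gamma>)"

end

theory Submission
  imports Defs
begin


lemma phi_std: "phi t = std_normal_density t"
  unfolding phi_def std_normal_density_def by simp

lemma phi_pos: "phi t > 0"
  by (simp add: phi_std normal_density_pos)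

lemma phi_le: "phi t \<le> 1 / sqrt (2*pi)"
  unfolding phi_def by (simp add: divide_right_mono)

lemma phi_meas[measurable]: "phi \<in> borel_measurable borel"
  unfolding phi_def by measurable

lemma ln_phi: "ln (phi t) = - t\<^sup>2/2 - ln (sqrt (2*pi))"
  unfolding phi_def by (simp add: ln_div)

lemma int_shift:
  fixes f :: "real \<Rightarrow> real"
  shows "(\<integral>y. f (y - x) \<partial>lborel) = (\<integral>y. f y \<partial>lborel)"
  using lborel_integral_real_affine[of 1 "\<lambda>y. f (y - x)" x] by simp

lemma integrable_shift:
  fixes f :: "real \<Rightarrow> real"
  shows "integrable lborel (\<lambda>y. f (y - x)) \<longleftrightarrow> integrable lborel f"
  using lborel_integrable_real_affine_iff[of 1 "\<lambda>y. f (y - x)" x] by simp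

lemma phi_int0: "integrable lborel phi" "(\<integral>y. phi y \<partial>lborel) = 1"
  using integrable_std_normal_moment[of 0] integral_std_normal_moment_even[of 0]
  by (simp_all add: phi_std[abs_def])

lemma phi_int1: "integrable lborel (\<lambda>y. phi y * y)" "(\<integral>y. phi y * y \<partial>lborel) = 0"
  using integrable_std_normal_moment[of 1] integral_std_normal_moment_odd[of 0]
  by (simp_all add: phi_std[abs_def])

lemma phi_int2: "integrable lborel (\<lambda>y. phi y * y\<^sup>2)" "(\<integral>y. phi y * y\<^sup>2 \<partial>lborel) = 1"
  using integrable_std_normal_moment[of 2] integral_std_normal_moment_even[of 1]
  by (simp_all add: phi_std[abs_def])

lemma phiS_int0: "integrable lborel (\<lambda>y. phi (y - x))" "(\<integral>y. phi (y - x) \<partial>lborel) = 1"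
  using phi_int0 integrable_shift[of phi x] int_shift[of phi x] by auto

lemma phiS_int2: "integrable lborel (\<lambda>y. phi (y - x) * y\<^sup>2)" "(\<integral>y. phi (y - x) * y\<^sup>2 \<partial>lborel) = 1 + x\<^sup>2"
proof -
  have e: "\<And>z. phi z * (z + x)\<^sup>2 = phi z * z\<^sup>2 + 2 * x * (phi z * z) + x\<^sup>2 * phi z"
    by (simp add: power2_eq_square algebra_simps)
  have i: "integrable lborel (\<lambda>z. phi z * (z + x)\<^sup>2)"
    unfolding e using phi_int0 phi_int1 phi_int2 by auto
  have v: "(\<integral>z. phi z * (z + x)\<^sup>2 \<partial>lborel) = 1 + x\<^sup>2"
    unfolding e using phi_int0 phi_int1 phi_int2 by simp
  show "integrable lborel (\<lambda>y. phi (y - x) * y\<^sup>2)"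
    using integrable_shift[of "\<lambda>z. phi z * (z + x)\<^sup>2" x] i by simp
  show "(\<integral>y. phi (y - x) * y\<^sup>2 \<partial>lborel) = 1 + x\<^sup>2"
    using int_shift[of "\<lambda>z. phi z * (z + x)\<^sup>2" x] v by simp
qed

definition H0 :: real where "H0 = (\<integral>y. phi y * ln (phi y) \<partial>lborel)"

lemma phi_ln_int: "integrable lborel (\<lambda>y. phi y * ln (phi y))"
proof -
  have "(\<lambda>y. phi y * ln (phi y)) = (\<lambda>y. (-1/2) * (phi y * y\<^sup>2) + (- ln (sqrt (2*pi))) * phi y)"
    by (auto simp: ln_phi algebra_simps)
  then show ?thesis using phi_int0 phi_int2 by simp
qed

lemma phiS_ln: "integrable lborel (\<lambda>y. phi (y - x) * ln (phi (y - x)))"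
   "(\<integral>y. phi (y - x) * ln (phi (y - x)) \<partial>lborel) = H0"
  using phi_ln_int integrable_shift[of "\<lambda>y. phi y * ln (phi y)" x] int_shift[of "\<lambda>y. phi y * ln (phi y)" x]
  by (auto simp: H0_def)



lemma rp_prob: "real_prob \<mu> \<Longrightarrow> prob_space \<mu>" by (simp add: real_prob_def)
lemma rp_sets: "real_prob \<mu> \<Longrightarrow> sets \<mu> = sets borel" by (simp add: real_prob_def)
lemma rp_space: "real_prob \<mu> \<Longrightarrow> space \<mu> = UNIV"
  using sets_eq_imp_space_eq[OF rp_sets] by simp
lemma rp_meas: "real_prob \<mu> \<Longrightarrow> f \<in> borel_measurable borel \<Longrightarrow> f \<in> borel_measurable \<mu>"
  using measurable_cong_sets[OF rp_sets[symmetric] refl] by blast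

lemma rp_int_bounded:
  fixes f :: "real \<Rightarrow> real"
  assumes "real_prob \<mu>" "f \<in> borel_measurable borel" "\<And>x. \<bar>f x\<bar> \<le> B"
  shows "integrable \<mu> f"
proof -
  interpret prob_space \<mu> using assms rp_prob by blast
  show ?thesis using assms(3) rp_meas[OF assms(1,2)]
    by (intro integrable_const_bound[where B=B]) auto
qed

lemma pY_meas[measurable]:
  assumes "real_prob \<nu>" shows "(\<lambda>y. pY y \<nu>) \<in> borel_measurable borel"
proof -
  interpret prob_space \<nu> using assms rp_prob by blast
  have s: "sets (borel \<Otimes>\<^sub>M \<nu>) = sets (borel \<Otimes>\<^sub>M borel)"
    using rp_sets[OF assms] by (intro sets_pair_measure_cong) auto
  have "(\<lambda>(y,x). phi (y - x)) \<in> borel_measurable (borel \<Otimes>\<^sub>M borel)" by measurable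
  then have "(\<lambda>(y,x). phi (y - x)) \<in> borel_measurable (borel \<Otimes>\<^sub>M \<nu>)"
    using measurable_cong_sets[OF s refl] by blast
  then show ?thesis unfolding pY_def
    by (rule borel_measurable_lebesgue_integral[where f="\<lambda>y x. phi (y - x)", simplified])
qed

lemma pY_int: "real_prob \<nu> \<Longrightarrow> integrable \<nu> (\<lambda>x. phi (y - x))"
  by (rule rp_int_bounded[where B="1/sqrt(2*pi)"]) (auto intro: order_trans[OF _ phi_le] simp: less_imp_le[OF phi_pos])

lemma pY_le: assumes "real_prob \<nu>" shows "pY y \<nu> \<le> 1 / sqrt (2*pi)"
proof -
  interpret prob_space \<nu> using assms rp_prob by blast
  have "pY y \<nu> \<le> (\<integral>x. 1 / sqrt (2*pi) \<partial>\<nu>)" unfolding pY_def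
    by (intro integral_mono pY_int assms) (auto simp: phi_le)
  then show ?thesis using prob_space by simp
qed

lemma pY_ge: assumes "real_prob \<nu>" "measure \<nu> {0} \<ge> q" "q \<ge> 0" shows "pY y \<nu> \<ge> q * phi y"
proof -
  interpret prob_space \<nu> using assms rp_prob by blast
  have "(\<integral>x. phi (y - x) * indicator {0} x \<partial>\<nu>) \<le> pY y \<nu>" unfolding pY_def
    by (intro integral_mono pY_int assms rp_int_bounded[where B="1/sqrt(2*pi)"])
       (auto simp: indicator_def less_imp_le[OF phi_pos] phi_le)
  moreover have "(\<lambda>x. phi (y - x) * indicator {0} x) = (\<lambda>x. phi y * indicator {0} x)"
    by (auto simp: indicator_def)
  moreover have "{0} \<in> sets \<nu>" using rp_sets[OF assms(1)] by simp
  ultimately have "phi y * measure \<nu> {0} \<le> pY y \<nu>" by simp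
  moreover have "q * phi y \<le> phi y * measure \<nu> {0}"
    using assms(2) phi_pos[of y] by (simp add: mult.commute mult_left_mono)
  ultimately show ?thesis by simp
qed



lemma pair_sets: "real_prob \<mu> \<Longrightarrow> sets (\<mu> \<Otimes>\<^sub>M lborel) = sets (borel \<Otimes>\<^sub>M borel)"
  using rp_sets by (intro sets_pair_measure_cong) auto

lemma pair_meas: "real_prob \<mu> \<Longrightarrow> f \<in> borel_measurable (borel \<Otimes>\<^sub>M borel) \<Longrightarrow> f \<in> borel_measurable (\<mu> \<Otimes>\<^sub>M lborel)"
  using measurable_cong_sets[OF pair_sets refl] by blast

lemma phig_int:
  fixes g :: "real \<Rightarrow> real"
  assumes gm[measurable]: "g \<in> borel_measurable borel" and gb: "\<And>y. \<bar>g y\<bar> \<le> K + y\<^sup>2/2"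
  shows "integrable lborel (\<lambda>y. phi (y - x) * g y)"
proof -
  have "(\<lambda>y. phi (y - x) * (K + y\<^sup>2/2)) = (\<lambda>y. K * phi (y - x) + (1/2) * (phi (y - x) * y\<^sup>2))"
    by (auto simp: algebra_simps)
  then have bnd: "integrable lborel (\<lambda>y. phi (y - x) * (K + y\<^sup>2/2))"
    using phiS_int0[of x] phiS_int2[of x] by simp
  have nb: "\<And>x y. norm (phi (y - x) * g y) \<le> phi (y - x) * (K + y\<^sup>2/2)"
    using gb phi_pos by (simp add: abs_mult mult_left_mono less_imp_le)
  show ?thesis
    by (rule Bochner_Integration.integrable_bound[OF bnd]) (use nb in \<open>auto intro!: AE_I2 intro: order_trans[OF _ abs_ge_self]\<close>)
qed

lemma fub:
  fixes g :: "real \<Rightarrow> real"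
  assumes mu: "real_prob \<mu>" and m2: "integrable \<mu> (\<lambda>x. x\<^sup>2)"
    and gm[measurable]: "g \<in> borel_measurable borel" and gb: "\<And>y. \<bar>g y\<bar> \<le> K + y\<^sup>2/2"
  shows "integrable \<mu> (\<lambda>x. \<integral>y. phi (y - x) * g y \<partial>lborel)"
    and "integrable lborel (\<lambda>y. pY y \<mu> * g y)"
    and "(\<integral>x. (\<integral>y. phi (y - x) * g y \<partial>lborel) \<partial>\<mu>) = (\<integral>y. pY y \<mu> * g y \<partial>lborel)"
    and "\<And>x. integrable lborel (\<lambda>y. phi (y - x) * g y)"
proof -
  interpret prob_space \<mu> using mu rp_prob by blast
  interpret pair_sigma_finite \<mu> lborel ..
  have bnd: "\<And>x. integrable lborel (\<lambda>y. phi (y - x) * (K + y\<^sup>2/2))"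
  proof -
    fix x
    have "(\<lambda>y. phi (y - x) * (K + y\<^sup>2/2)) = (\<lambda>y. K * phi (y - x) + (1/2) * (phi (y - x) * y\<^sup>2))"
      by (auto simp: algebra_simps)
    then show "integrable lborel (\<lambda>y. phi (y - x) * (K + y\<^sup>2/2))"
      using phiS_int0[of x] phiS_int2[of x] by simp
  qed
  have bndv: "\<And>x. (\<integral>y. phi (y - x) * (K + y\<^sup>2/2) \<partial>lborel) = K + (1 + x\<^sup>2)/2"
  proof -
    fix x
    have "(\<lambda>y. phi (y - x) * (K + y\<^sup>2/2)) = (\<lambda>y. K * phi (y - x) + (1/2) * (phi (y - x) * y\<^sup>2))"
      by (auto simp: algebra_simps)
    then show "(\<integral>y. phi (y - x) * (K + y\<^sup>2/2) \<partial>lborel) = K + (1 + x\<^sup>2)/2"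
      using phiS_int0[of x] phiS_int2[of x] by simp
  qed
  have nb: "\<And>x y. norm (phi (y - x) * g y) \<le> phi (y - x) * (K + y\<^sup>2/2)"
    using gb phi_pos by (simp add: abs_mult mult_left_mono less_imp_le)
  show ix: "\<And>x. integrable lborel (\<lambda>y. phi (y - x) * g y)"
  proof -
    fix x show "integrable lborel (\<lambda>y. phi (y - x) * g y)"
      by (rule Bochner_Integration.integrable_bound[OF bnd[of x]]) (use nb in \<open>auto intro!: AE_I2 intro: order_trans[OF _ abs_ge_self]\<close>)
  qed
  have fm: "(\<lambda>(x,y). phi (y - x) * g y) \<in> borel_measurable (\<mu> \<Otimes>\<^sub>M lborel)"
    by (rule pair_meas[OF mu]) measurable
  have fm': "(\<lambda>(x,y). norm (phi (y - x) * g y)) \<in> borel_measurable (\<mu> \<Otimes>\<^sub>M lborel)"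
    by (rule pair_meas[OF mu]) measurable
  have ib: "integrable \<mu> (\<lambda>x. K + (1 + x\<^sup>2)/2)"
    using m2 by auto
  have I: "integrable (\<mu> \<Otimes>\<^sub>M lborel) (\<lambda>(x,y). phi (y - x) * g y)"
  proof (rule Fubini_integrable[OF fm])
    show "integrable \<mu> (\<lambda>x. \<integral>y. norm (case (x, y) of (x, y) \<Rightarrow> phi (y - x) * g y) \<partial>lborel)"
    proof (rule Bochner_Integration.integrable_bound[OF ib])
      show "(\<lambda>x. \<integral>y. norm (case (x, y) of (x, y) \<Rightarrow> phi (y - x) * g y) \<partial>lborel) \<in> borel_measurable \<mu>"
        using fm' lborel.borel_measurable_lebesgue_integral[of "\<lambda>x y. norm (phi (y - x) * g y)" \<mu>] by simp
      show "AE x in \<mu>. norm (\<integral>y. norm (case (x, y) of (x, y) \<Rightarrow> phi (y - x) * g y) \<partial>lborel) \<le> norm (K + (1 + x\<^sup>2)/2)"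
      proof (intro AE_I2)
        fix x
        have "(\<integral>y. norm (phi (y - x) * g y) \<partial>lborel) \<le> (\<integral>y. phi (y - x) * (K + y\<^sup>2/2) \<partial>lborel)"
          by (intro integral_mono bnd nb) (use ix in auto)
        moreover have "0 \<le> (\<integral>y. norm (phi (y - x) * g y) \<partial>lborel)" by simp
        ultimately show "norm (\<integral>y. norm (case (x, y) of (x, y) \<Rightarrow> phi (y - x) * g y) \<partial>lborel) \<le> norm (K + (1 + x\<^sup>2)/2)"
          using bndv[of x] by simp
      qed
    qed
    show "AE x in \<mu>. integrable lborel (\<lambda>y. case (x, y) of (x, y) \<Rightarrow> phi (y - x) * g y)"
      using ix by simp
  qed
  show "integrable \<mu> (\<lambda>x. \<integral>y. phi (y - x) * g y \<partial>lborel)"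
    using integrable_fst[OF I] .
  have e: "\<And>y. (\<integral>x. phi (y - x) * g y \<partial>\<mu>) = pY y \<mu> * g y"
    by (simp add: pY_def)
  show "integrable lborel (\<lambda>y. pY y \<mu> * g y)"
    using integrable_snd[OF I] by (simp add: e pY_def)
  show "(\<integral>x. (\<integral>y. phi (y - x) * g y \<partial>lborel) \<partial>\<mu>) = (\<integral>y. pY y \<mu> * g y \<partial>lborel)"
    using Fubini_integral[OF I] by (simp add: e pY_def)
qed



definition Kq :: "real \<Rightarrow> real" where "Kq q = - ln q + ln (sqrt (2*pi))"

definition J :: "real measure \<Rightarrow> real measure \<Rightarrow> real" where
  "J \<mu> \<nu> = (\<integral>y. pY y \<mu> * ln (pY y \<nu>) \<partial>lborel)"

lemma pY_pos: "real_prob \<nu> \<Longrightarrow> q \<le> measure \<nu> {0} \<Longrightarrow> 0 < q \<Longrightarrow> pY y \<nu> > 0"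
  using pY_ge[of \<nu> q y] phi_pos[of y] by (smt (verit) mult_pos_pos)

lemma lnpY_bound:
  assumes "real_prob \<nu>" "q \<le> measure \<nu> {0}" "0 < q"
  shows "\<bar>ln (pY y \<nu>)\<bar> \<le> Kq q + y\<^sup>2/2"
proof -
  have p: "pY y \<nu> > 0" using pY_pos assms by blast
  have "ln (pY y \<nu>) \<le> ln (1 / sqrt (2*pi))" using pY_le[OF assms(1)] p by simp
  also have "\<dots> \<le> 0" using pi_gt3 by (simp add: ln_div)
  finally have u: "ln (pY y \<nu>) \<le> 0" .
  have "ln (q * phi y) \<le> ln (pY y \<nu>)" using pY_ge[OF assms(1,2)] assms(3) phi_pos p
    by (simp add: less_imp_le)
  moreover have "ln (q * phi y) = ln q - y\<^sup>2/2 - ln (sqrt (2*pi))"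
    using assms(3) phi_pos[of y] by (simp add: ln_mult ln_phi)
  ultimately show ?thesis using u unfolding Kq_def by linarith
qed

lemma dfun_eq:
  assumes "real_prob \<nu>" "q \<le> measure \<nu> {0}" "0 < q"
  shows "dfun x \<nu> = H0 - (\<integral>y. phi (y - x) * ln (pY y \<nu>) \<partial>lborel)"
proof -
  have i2: "integrable lborel (\<lambda>y. phi (y - x) * ln (pY y \<nu>))"
    using assms by (intro phig_int[where K="Kq q"] lnpY_bound) auto
  have "dfun x \<nu> = (\<integral>y. phi (y - x) * ln (phi (y - x)) - phi (y - x) * ln (pY y \<nu>) \<partial>lborel)"
    unfolding dfun_def
    by (rule Bochner_Integration.integral_cong[OF refl]) (use pY_pos[OF assms] phi_pos in \<open>simp add: ln_div right_diff_distrib less_imp_neq[symmetric]\<close>)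
  also have "\<dots> = H0 - (\<integral>y. phi (y - x) * ln (pY y \<nu>) \<partial>lborel)"
    using phiS_ln[of x] i2 by simp
  finally show ?thesis .
qed



definition GP :: "real \<Rightarrow> real measure \<Rightarrow> bool" where
  "GP q \<mu> \<longleftrightarrow> real_prob \<mu> \<and> q \<le> measure \<mu> {0} \<and> integrable \<mu> (\<lambda>x. x\<^sup>2)"

lemma lnpY_meas: assumes "real_prob \<nu>" shows "(\<lambda>y. ln (pY y \<nu>)) \<in> borel_measurable borel"
proof -
  note pY_meas[OF assms, measurable]
  show ?thesis by measurable
qed

lemma dfun_int:
  assumes mu: "real_prob \<mu>" "integrable \<mu> (\<lambda>x. x\<^sup>2)"
    and nu: "real_prob \<nu>" "q \<le> measure \<nu> {0}" "0 < q"
  shows "integrable \<mu> (\<lambda>x. dfun x \<nu>)" "(\<integral>x. dfun x \<nu> \<partial>\<mu>) = H0 - J \<mu> \<nu>"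
proof -
  interpret prob_space \<mu> using mu rp_prob by blast
  note F = fub[OF mu, of "\<lambda>y. ln (pY y \<nu>)" "Kq q", OF lnpY_meas[OF nu(1)] lnpY_bound[OF nu]]
  have e: "(\<lambda>x. dfun x \<nu>) = (\<lambda>x. H0 - (\<integral>y. phi (y - x) * ln (pY y \<nu>) \<partial>lborel))"
    using dfun_eq[OF nu] by auto
  show "integrable \<mu> (\<lambda>x. dfun x \<nu>)" unfolding e using F(1) by simp
  show "(\<integral>x. dfun x \<nu> \<partial>\<mu>) = H0 - J \<mu> \<nu>" unfolding e J_def using F(1) F(3) prob_space
    by simp
qed

lemma pY_total:
  assumes mu: "real_prob \<mu>" "integrable \<mu> (\<lambda>x. x\<^sup>2)"
  shows "integrable lborel (\<lambda>y. pY y \<mu>)" "(\<integral>y. pY y \<mu> \<partial>lborel) = 1"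
proof -
  interpret prob_space \<mu> using mu rp_prob by blast
  note F = fub[OF mu, of "\<lambda>y. 1" 1]
  have a: "\<And>y::real. \<bar>1::real\<bar> \<le> 1 + y\<^sup>2/2" by simp
  show "integrable lborel (\<lambda>y. pY y \<mu>)" using F(2)[OF _ a] by simp
  show "(\<integral>y. pY y \<mu> \<partial>lborel) = 1" using F(3)[OF _ a] phiS_int0 prob_space by simp
qed

lemma J_int:
  assumes mu: "real_prob \<mu>" "integrable \<mu> (\<lambda>x. x\<^sup>2)"
    and nu: "real_prob \<nu>" "q \<le> measure \<nu> {0}" "0 < q"
  shows "integrable lborel (\<lambda>y. pY y \<mu> * ln (pY y \<nu>))"
  using fub(2)[OF mu, of "\<lambda>y. ln (pY y \<nu>)" "Kq q", OF lnpY_meas[OF nu(1)] lnpY_bound[OF nu]] .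

lemma KL:
  assumes "GP q \<mu>" "GP q \<nu>" "0 < q"
  shows "J \<mu> \<nu> \<le> J \<mu> \<mu>"
proof -
  have mu: "real_prob \<mu>" "integrable \<mu> (\<lambda>x. x\<^sup>2)" "q \<le> measure \<mu> {0}" using assms GP_def by auto
  have nu: "real_prob \<nu>" "integrable \<nu> (\<lambda>x. x\<^sup>2)" "q \<le> measure \<nu> {0}" using assms GP_def by auto
  have i1: "integrable lborel (\<lambda>y. pY y \<mu> * ln (pY y \<nu>))" using J_int[OF mu(1,2) nu(1,3) assms(3)] .
  have i2: "integrable lborel (\<lambda>y. pY y \<mu> * ln (pY y \<mu>))" using J_int[OF mu(1,2) mu(1,3) assms(3)] .
  have "J \<mu> \<nu> - J \<mu> \<mu> = (\<integral>y. pY y \<mu> * ln (pY y \<nu>) - pY y \<mu> * ln (pY y \<mu>) \<partial>lborel)"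
    unfolding J_def using i1 i2 by simp
  also have "\<dots> \<le> (\<integral>y. pY y \<nu> - pY y \<mu> \<partial>lborel)"
  proof (rule integral_mono)
    show "integrable lborel (\<lambda>y. pY y \<mu> * ln (pY y \<nu>) - pY y \<mu> * ln (pY y \<mu>))" using i1 i2 by simp
    show "integrable lborel (\<lambda>y. pY y \<nu> - pY y \<mu>)" using pY_total(1)[OF mu(1,2)] pY_total(1)[OF nu(1,2)] by simp
    fix y
    have a: "pY y \<mu> > 0" using pY_pos mu assms(3) by blast
    have b: "pY y \<nu> > 0" using pY_pos nu assms(3) by blast
    have "ln (pY y \<nu> / pY y \<mu>) \<le> pY y \<nu> / pY y \<mu> - 1" using a b by (intro ln_le_minus_one) simp
    then have "pY y \<mu> * ln (pY y \<nu> / pY y \<mu>) \<le> pY y \<mu> * (pY y \<nu> / pY y \<mu> - 1)"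
      using a by (simp add: mult_left_mono)
    then show "pY y \<mu> * ln (pY y \<nu>) - pY y \<mu> * ln (pY y \<mu>) \<le> pY y \<nu> - pY y \<mu>"
      using a b by (simp add: ln_div right_diff_distrib)
  qed
  also have "\<dots> = 0" using pY_total[OF mu(1,2)] pY_total[OF nu(1,2)] by simp
  finally show ?thesis by simp
qed



definition mix :: "real \<Rightarrow> real measure \<Rightarrow> real measure \<Rightarrow> real measure" where
  "mix t \<mu> \<nu> = measure_of UNIV (sets borel) (\<lambda>A. ennreal (1-t) * emeasure \<mu> A + ennreal t * emeasure \<nu> A)"

lemma meas_b: "sets M = sets borel \<Longrightarrow> f \<in> borel_measurable borel \<Longrightarrow> f \<in> borel_measurable M"
  using measurable_cong_sets[OF _ refl] by blast

context
  fixes t :: real and \<mu> \<nu> :: "real measure"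
  assumes mu: "real_prob \<mu>" and nu: "real_prob \<nu>" and t: "0 \<le> t" "t \<le> 1"
begin

lemma sets_mix[simp, measurable_cong]: "sets (mix t \<mu> \<nu>) = sets borel"
  unfolding mix_def using sets.sigma_sets_eq[of borel] by simp

lemma space_mix[simp]: "space (mix t \<mu> \<nu>) = UNIV"
  unfolding mix_def by simp

lemma emeasure_mix: "A \<in> sets borel \<Longrightarrow> emeasure (mix t \<mu> \<nu>) A = ennreal (1-t) * emeasure \<mu> A + ennreal t * emeasure \<nu> A"
  unfolding mix_def
proof (rule emeasure_measure_of_sigma)
  show "sigma_algebra UNIV (sets borel)" using sets.sigma_algebra_axioms[of borel] by simp
  show "positive (sets borel) (\<lambda>A. ennreal (1-t) * emeasure \<mu> A + ennreal t * emeasure \<nu> A)"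
    by (simp add: positive_def)
  show "countably_additive (sets borel) (\<lambda>A. ennreal (1-t) * emeasure \<mu> A + ennreal t * emeasure \<nu> A)"
  proof (rule countably_additiveI)
    fix A :: "nat \<Rightarrow> real set" assume *: "range A \<subseteq> sets borel" "disjoint_family A"
    have *: "range A \<subseteq> sets \<mu>" "range A \<subseteq> sets \<nu>" "disjoint_family A" using * rp_sets mu nu by auto
    have "(\<Sum>i. ennreal (1-t) * emeasure \<mu> (A i) + ennreal t * emeasure \<nu> (A i))
        = ennreal (1-t) * (\<Sum>i. emeasure \<mu> (A i)) + ennreal t * (\<Sum>i. emeasure \<nu> (A i))"
      by (simp add: suminf_add[symmetric])
    also have "\<dots> = ennreal (1-t) * emeasure \<mu> (\<Union>i. A i) + ennreal t * emeasure \<nu> (\<Union>i. A i)"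
      using * by (simp add: suminf_emeasure)
    finally show "(\<Sum>i. ennreal (1-t) * emeasure \<mu> (A i) + ennreal t * emeasure \<nu> (A i))
        = ennreal (1-t) * emeasure \<mu> (\<Union>i. A i) + ennreal t * emeasure \<nu> (\<Union>i. A i)" .
  qed
qed

lemma mix_rp: "real_prob (mix t \<mu> \<nu>)"
proof -
  interpret m: prob_space \<mu> using mu rp_prob by blast
  interpret n: prob_space \<nu> using nu rp_prob by blast
  have "emeasure (mix t \<mu> \<nu>) (space (mix t \<mu> \<nu>)) = 1"
    using emeasure_mix[of UNIV] m.emeasure_space_1 n.emeasure_space_1 rp_space[OF mu] rp_space[OF nu] t
    by (simp add: ennreal_plus[symmetric] del: ennreal_plus)
  then show ?thesis unfolding real_prob_def by (simp add: prob_spaceI)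
qed

lemma measure_mix: "A \<in> sets borel \<Longrightarrow> measure (mix t \<mu> \<nu>) A = (1-t) * measure \<mu> A + t * measure \<nu> A"
proof -
  assume A: "A \<in> sets borel"
  interpret m: prob_space \<mu> using mu rp_prob by blast
  interpret n: prob_space \<nu> using nu rp_prob by blast
  have "emeasure (mix t \<mu> \<nu>) A = ennreal (1-t) * ennreal (measure \<mu> A) + ennreal t * ennreal (measure \<nu> A)"
    using emeasure_mix[OF A] by (simp add: m.emeasure_eq_measure n.emeasure_eq_measure)
  also have "\<dots> = ennreal ((1-t) * measure \<mu> A + t * measure \<nu> A)"
    using t by (simp add: ennreal_mult[symmetric] ennreal_plus[symmetric] del: ennreal_plus)
  finally have "emeasure (mix t \<mu> \<nu>) A = ennreal ((1-t) * measure \<mu> A + t * measure \<nu> A)" .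
  then show ?thesis using t
    by (intro measure_eq_emeasure_eq_ennreal) (auto intro!: add_nonneg_nonneg mult_nonneg_nonneg)
qed

lemma nn_integral_mix:
  assumes f: "f \<in> borel_measurable borel"
  shows "(\<integral>\<^sup>+x. f x \<partial>mix t \<mu> \<nu>) = ennreal (1-t) * (\<integral>\<^sup>+x. f x \<partial>\<mu>) + ennreal t * (\<integral>\<^sup>+x. f x \<partial>\<nu>)"
  using f
proof induction
  case (cong f g)
  have "\<And>M. sets M = sets borel \<Longrightarrow> (\<integral>\<^sup>+x. f x \<partial>M) = (\<integral>\<^sup>+x. g x \<partial>M)"
    using cong(3) by (intro nn_integral_cong) (simp add: sets_eq_imp_space_eq)
  then show ?case using cong rp_sets mu nu by simp
next
  case (set A)
  then show ?case using emeasure_mix[OF set] rp_sets mu nu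
    by (simp add: nn_integral_indicator)
next
  case (mult f c)
  have m: "\<And>M. sets M = sets borel \<Longrightarrow> (\<integral>\<^sup>+x. c * f x \<partial>M) = c * (\<integral>\<^sup>+x. f x \<partial>M)"
    using mult meas_b by (intro nn_integral_cmult) blast
  show ?case using mult rp_sets[OF mu] rp_sets[OF nu] m[of "mix t \<mu> \<nu>"] m[of \<mu>] m[of \<nu>]
    by (simp add: distrib_left mult.left_commute)
next
  case (add f g)
  have m: "\<And>M. sets M = sets borel \<Longrightarrow> (\<integral>\<^sup>+x. g x + f x \<partial>M) = (\<integral>\<^sup>+x. g x \<partial>M) + (\<integral>\<^sup>+x. f x \<partial>M)"
    using add meas_b by (intro nn_integral_add) blast+
  show ?case using add rp_sets[OF mu] rp_sets[OF nu] m[of "mix t \<mu> \<nu>"] m[of \<mu>] m[of \<nu>]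
    by (simp add: distrib_left algebra_simps)
next
  case (seq U)
  have m: "\<And>M. sets M = sets borel \<Longrightarrow> (\<integral>\<^sup>+x. (SUP i. U i) x \<partial>M) = (SUP i. \<integral>\<^sup>+x. U i x \<partial>M)"
  proof -
    fix M :: "real measure" assume "sets M = sets borel"
    then show "(\<integral>\<^sup>+x. (SUP i. U i) x \<partial>M) = (SUP i. \<integral>\<^sup>+x. U i x \<partial>M)"
      using seq meas_b nn_integral_monotone_convergence_SUP[of U M] by (simp add: image_comp)
  qed
  have "(\<integral>\<^sup>+x. (SUP i. U i) x \<partial>mix t \<mu> \<nu>) = (SUP i. ennreal (1-t) * (\<integral>\<^sup>+x. U i x \<partial>\<mu>) + ennreal t * (\<integral>\<^sup>+x. U i x \<partial>\<nu>))"
    using m[of "mix t \<mu> \<nu>"] seq by simp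
  also have "\<dots> = (SUP i. ennreal (1-t) * (\<integral>\<^sup>+x. U i x \<partial>\<mu>)) + (SUP i. ennreal t * (\<integral>\<^sup>+x. U i x \<partial>\<nu>))"
  proof (rule ennreal_SUP_add)
    show "incseq (\<lambda>i. ennreal (1-t) * (\<integral>\<^sup>+x. U i x \<partial>\<mu>))"
      using seq(3) unfolding incseq_def by (auto intro!: mult_left_mono nn_integral_mono simp: le_fun_def)
    show "incseq (\<lambda>i. ennreal t * (\<integral>\<^sup>+x. U i x \<partial>\<nu>))"
      using seq(3) unfolding incseq_def by (auto intro!: mult_left_mono nn_integral_mono simp: le_fun_def)
  qed
  also have "\<dots> = ennreal (1-t) * (\<integral>\<^sup>+x. (SUP i. U i) x \<partial>\<mu>) + ennreal t * (\<integral>\<^sup>+x. (SUP i. U i) x \<partial>\<nu>)"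
    using m[of \<mu>] m[of \<nu>] rp_sets[OF mu] rp_sets[OF nu] by (simp add: SUP_mult_left_ennreal)
  finally show ?case .
qed

lemma integral_mix:
  fixes f :: "real \<Rightarrow> real"
  assumes f[measurable]: "f \<in> borel_measurable borel" and fi: "integrable \<mu> f" "integrable \<nu> f"
  shows "integrable (mix t \<mu> \<nu>) f" "(\<integral>x. f x \<partial>mix t \<mu> \<nu>) = (1-t) * (\<integral>x. f x \<partial>\<mu>) + t * (\<integral>x. f x \<partial>\<nu>)"
proof -
  have fm: "\<And>M. sets M = sets borel \<Longrightarrow> f \<in> borel_measurable M"
    using f measurable_cong_sets[OF _ refl] by blast
  have a: "(\<integral>\<^sup>+x. norm (f x) \<partial>\<mu>) < \<infinity>" "(\<integral>\<^sup>+x. norm (f x) \<partial>\<nu>) < \<infinity>"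
    using fi unfolding integrable_iff_bounded by auto
  have "(\<integral>\<^sup>+x. norm (f x) \<partial>mix t \<mu> \<nu>) = ennreal (1-t) * (\<integral>\<^sup>+x. norm (f x) \<partial>\<mu>) + ennreal t * (\<integral>\<^sup>+x. norm (f x) \<partial>\<nu>)"
    by (rule nn_integral_mix) measurable
  also have "\<dots> < \<infinity>" using a by (simp add: ennreal_mult_less_top)
  finally show I: "integrable (mix t \<mu> \<nu>) f"
    unfolding integrable_iff_bounded by (simp add: fm)
  have nn: "\<And>g::real\<Rightarrow>real. g \<in> borel_measurable borel \<Longrightarrow> (\<And>x. 0 \<le> g x) \<Longrightarrow> integrable \<mu> g \<Longrightarrow> integrable \<nu> g \<Longrightarrow>
     integrable (mix t \<mu> \<nu>) g \<Longrightarrow> (\<integral>x. g x \<partial>mix t \<mu> \<nu>) = (1-t) * (\<integral>x. g x \<partial>\<mu>) + t * (\<integral>x. g x \<partial>\<nu>)"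
  proof -
    fix g :: "real \<Rightarrow> real" assume gm: "g \<in> borel_measurable borel" and g0: "\<And>x. 0 \<le> g x"
      and gi: "integrable \<mu> g" "integrable \<nu> g" "integrable (mix t \<mu> \<nu>) g"
    have i0: "0 \<le> (\<integral>x. g x \<partial>\<mu>)" "0 \<le> (\<integral>x. g x \<partial>\<nu>)" "0 \<le> (\<integral>x. g x \<partial>mix t \<mu> \<nu>)"
      using g0 by auto
    have "ennreal (\<integral>x. g x \<partial>mix t \<mu> \<nu>) = (\<integral>\<^sup>+x. g x \<partial>mix t \<mu> \<nu>)"
      using gi g0 by (intro nn_integral_eq_integral[symmetric]) auto
    also have "\<dots> = ennreal (1-t) * (\<integral>\<^sup>+x. g x \<partial>\<mu>) + ennreal t * (\<integral>\<^sup>+x. g x \<partial>\<nu>)"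
      using gm by (intro nn_integral_mix) measurable
    also have "\<dots> = ennreal (1-t) * ennreal (\<integral>x. g x \<partial>\<mu>) + ennreal t * ennreal (\<integral>x. g x \<partial>\<nu>)"
      using gi g0 by (simp add: nn_integral_eq_integral)
    also have "\<dots> = ennreal ((1-t) * (\<integral>x. g x \<partial>\<mu>) + t * (\<integral>x. g x \<partial>\<nu>))"
      using t i0 by (simp add: ennreal_mult[symmetric] ennreal_plus[symmetric] del: ennreal_plus)
    finally have "ennreal (\<integral>x. g x \<partial>mix t \<mu> \<nu>) = ennreal ((1-t) * (\<integral>x. g x \<partial>\<mu>) + t * (\<integral>x. g x \<partial>\<nu>))" .
    then show "(\<integral>x. g x \<partial>mix t \<mu> \<nu>) = (1-t) * (\<integral>x. g x \<partial>\<mu>) + t * (\<integral>x. g x \<partial>\<nu>)"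
      using t i0 by (subst (asm) ennreal_inj) auto
  qed
  have e: "(\<integral>x. f x \<partial>M) = (\<integral>x. max 0 (f x) \<partial>M) - (\<integral>x. max 0 (- f x) \<partial>M)" if "integrable M f" for M :: "real measure"
  proof -
    have "(\<integral>x. f x \<partial>M) = (\<integral>x. max 0 (f x) - max 0 (- f x) \<partial>M)"
      by (rule Bochner_Integration.integral_cong) auto
    also have "\<dots> = (\<integral>x. max 0 (f x) \<partial>M) - (\<integral>x. max 0 (- f x) \<partial>M)"
      using that by (intro Bochner_Integration.integral_diff) auto
    finally show ?thesis .
  qed
  have m1: "(\<lambda>x. max 0 (f x)) \<in> borel_measurable borel" "(\<lambda>x. max 0 (- f x)) \<in> borel_measurable borel" by measurable
  show "(\<integral>x. f x \<partial>mix t \<mu> \<nu>) = (1-t) * (\<integral>x. f x \<partial>\<mu>) + t * (\<integral>x. f x \<partial>\<nu>)"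
  proof -
    have j: "integrable M (\<lambda>x. max 0 (f x))" "integrable M (\<lambda>x. max 0 (- f x))" if "integrable M f" for M :: "real measure"
      using that by auto
    have h1: "(\<integral>x. max 0 (f x) \<partial>mix t \<mu> \<nu>) = (1-t) * (\<integral>x. max 0 (f x) \<partial>\<mu>) + t * (\<integral>x. max 0 (f x) \<partial>\<nu>)"
      by (rule nn[OF m1(1) _ j(1)[OF fi(1)] j(1)[OF fi(2)] j(1)[OF I]]) simp
    have h2: "(\<integral>x. max 0 (- f x) \<partial>mix t \<mu> \<nu>) = (1-t) * (\<integral>x. max 0 (- f x) \<partial>\<mu>) + t * (\<integral>x. max 0 (- f x) \<partial>\<nu>)"
      by (rule nn[OF m1(2) _ j(2)[OF fi(1)] j(2)[OF fi(2)] j(2)[OF I]]) simp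
    show ?thesis unfolding e[OF I] e[OF fi(1)] e[OF fi(2)] h1 h2 by (simp add: algebra_simps)
  qed
qed

end



lemma pY_mix:
  assumes "real_prob \<mu>" "real_prob \<nu>" "0 \<le> t" "t \<le> 1"
  shows "pY y (mix t \<mu> \<nu>) = (1-t) * pY y \<mu> + t * pY y \<nu>"
  unfolding pY_def using integral_mix(2)[OF assms, of "\<lambda>x. phi (y - x)"] pY_int assms by simp

lemma GP_mix:
  assumes "GP q \<mu>" "GP q \<nu>" "0 \<le> t" "t \<le> 1"
  shows "GP q (mix t \<mu> \<nu>)"
proof -
  have r: "real_prob \<mu>" "real_prob \<nu>" using assms GP_def by auto
  have "measure (mix t \<mu> \<nu>) {0} = (1-t) * measure \<mu> {0} + t * measure \<nu> {0}"
    using measure_mix[OF r assms(3,4)] by simp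
  also have "\<dots> \<ge> (1-t) * q + t * q"
    using assms unfolding GP_def by (intro add_mono mult_left_mono) auto
  finally have "q \<le> measure (mix t \<mu> \<nu>) {0}" by (simp add: algebra_simps)
  then show ?thesis using assms mix_rp[OF r assms(3,4)] integral_mix(1)[OF r assms(3,4), of "\<lambda>x. x\<^sup>2"]
    unfolding GP_def by auto
qed

lemma int_x2_mix:
  assumes "GP q \<mu>" "GP q \<nu>" "0 \<le> t" "t \<le> 1"
  shows "(\<integral>x. x\<^sup>2 \<partial>mix t \<mu> \<nu>) = (1-t) * (\<integral>x. x\<^sup>2 \<partial>\<mu>) + t * (\<integral>x. x\<^sup>2 \<partial>\<nu>)"
  using assms integral_mix(2)[of \<mu> \<nu> t "\<lambda>x. x\<^sup>2"] unfolding GP_def by auto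

lemma nn_x2: assumes "GP q \<mu>" shows "(\<integral>\<^sup>+x. ennreal (x\<^sup>2) \<partial>\<mu>) = ennreal (\<integral>x. x\<^sup>2 \<partial>\<mu>)"
  using assms unfolding GP_def by (intro nn_integral_eq_integral) auto

lemma Lambda_q_GP: "\<mu> \<in> Lambda_q q \<longleftrightarrow> GP q \<mu>"
proof
  assume "\<mu> \<in> Lambda_q q"
  then obtain g where g: "g \<ge> 0" "real_prob \<mu>" "q \<le> measure \<mu> {0}" "(\<integral>\<^sup>+x. ennreal (x\<^sup>2) \<partial>\<mu>) \<le> ennreal g"
    unfolding Lambda_q_def Lambda_def by auto
  have "(\<integral>\<^sup>+x. ennreal (norm (x\<^sup>2)) \<partial>\<mu>) < \<infinity>" using g(4) by (simp add: le_less_trans)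
  then have "integrable \<mu> (\<lambda>x. x\<^sup>2)" using rp_meas[OF g(2), of "\<lambda>x. x\<^sup>2"]
    unfolding integrable_iff_bounded by simp
  then show "GP q \<mu>" using g unfolding GP_def by auto
next
  assume a: "GP q \<mu>"
  have "0 \<le> (\<integral>x. x\<^sup>2 \<partial>\<mu>)" by simp
  then show "\<mu> \<in> Lambda_q q" using a nn_x2[OF a] unfolding Lambda_q_def Lambda_def GP_def
    by (auto intro!: bexI[of _ "\<integral>x. x\<^sup>2 \<partial>\<mu>"])
qed

lemma Lambda_GP: "0 \<le> \<gamma> \<Longrightarrow> \<mu> \<in> Lambda \<gamma> q \<longleftrightarrow> GP q \<mu> \<and> (\<integral>x. x\<^sup>2 \<partial>\<mu>) \<le> \<gamma>"
proof
  assume g: "0 \<le> \<gamma>" "\<mu> \<in> Lambda \<gamma> q"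
  then have "\<mu> \<in> Lambda_q q" unfolding Lambda_q_def by auto
  then have a: "GP q \<mu>" using Lambda_q_GP by blast
  then show "GP q \<mu> \<and> (\<integral>x. x\<^sup>2 \<partial>\<mu>) \<le> \<gamma>" using g nn_x2[OF a] unfolding Lambda_def by auto
next
  assume "0 \<le> \<gamma>" "GP q \<mu> \<and> (\<integral>x. x\<^sup>2 \<partial>\<mu>) \<le> \<gamma>"
  then show "\<mu> \<in> Lambda \<gamma> q" using nn_x2[of q \<mu>] unfolding Lambda_def GP_def by auto
qed

lemma GP_delta: assumes "q \<le> 1" shows "GP q (return borel 0)" "(\<integral>x. x\<^sup>2 \<partial>return borel (0::real)) = 0"
proof -
  show "(\<integral>x. x\<^sup>2 \<partial>return borel (0::real)) = 0" by (simp add: integral_return)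
  have "measure (return borel (0::real)) {0} = 1" by (simp add: measure_return)
  moreover have "integrable (return borel (0::real)) (\<lambda>x. x\<^sup>2)"
    unfolding integrable_iff_bounded by (simp add: nn_integral_return)
  ultimately show "GP q (return borel 0)" using assms unfolding GP_def real_prob_def
    by (auto simp: prob_space_return)
qed



lemma L1:
  fixes a b t :: real
  assumes "0 < a" "0 < b" "0 \<le> t" "t \<le> 1"
  shows "t * (b - a) \<le> ((1-t)*a + t*b) * (ln ((1-t)*a + t*b) - ln a)"
proof -
  define z where "z = (1-t)*a + t*b"
  have z: "z > 0" unfolding z_def using assms
    by (cases "t = 1") (auto intro!: add_pos_nonneg mult_nonneg_nonneg)
  have "ln (a/z) \<le> a/z - 1" using assms z by (intro ln_le_minus_one) simp
  then have "1 - a/z \<le> ln z - ln a" using assms z by (simp add: ln_div)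
  then have "z * (1 - a/z) \<le> z * (ln z - ln a)" using z by (simp add: mult_left_mono)
  moreover have "z * (1 - a/z) = z - a" using z by (simp add: field_simps)
  moreover have "z - a = t * (b - a)" unfolding z_def by (simp add: algebra_simps)
  ultimately show ?thesis unfolding z_def[symmetric] by simp
qed

lemma L2:
  fixes a b t :: real
  assumes "0 < a" "0 < b" "0 \<le> t" "t \<le> 1"
  shows "((1-t)*a + t*b) * (ln ((1-t)*a + t*b) - ln a) \<le> t * (b * (ln b - ln a))"
proof -
  define z where "z = (1-t)*a + t*b"
  have z: "z > 0" unfolding z_def using assms
    by (cases "t = 1") (auto intro!: add_pos_nonneg mult_nonneg_nonneg)
  define w where "w = t*b/z"
  have w: "0 \<le> w" "w \<le> 1" unfolding w_def using assms z
    by (auto simp: z_def divide_simps intro!: mult_nonneg_nonneg)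
  have "(1 - w) * ln 1 + w * ln (a/b) \<le> ln ((1 - w) *\<^sub>R 1 + w *\<^sub>R (a/b))"
    using concave_onD[OF ln_concave, of w 1 "a/b"] w assms by simp
  moreover have "(1 - w) *\<^sub>R 1 + w *\<^sub>R (a/b) = a/z"
  proof -
    have e: "z - t*b = (1-t)*a" unfolding z_def by (simp add: algebra_simps)
    have "(1 - w) *\<^sub>R 1 + w *\<^sub>R (a/b) = (z - t*b)/z + t*a/z"
      unfolding w_def using z assms by (simp add: field_simps)
    also have "\<dots> = a/z" unfolding e using z by (simp add: field_simps)
    finally show ?thesis .
  qed
  ultimately have "w * (ln a - ln b) \<le> ln a - ln z" using assms z by (simp add: ln_div)
  then have "z * (w * (ln a - ln b)) \<le> z * (ln a - ln z)" using z by (simp add: mult_left_mono)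
  moreover have "z * w = t * b" unfolding w_def using z by simp
  ultimately have h: "t*b*(ln a - ln b) \<le> z*(ln a - ln z)" by (simp add: mult.assoc[symmetric])
  show ?thesis unfolding z_def[symmetric] using h by (simp add: algebra_simps)
qed

lemma L3:
  fixes a b :: real and t :: "nat \<Rightarrow> real"
  assumes "0 < a" "0 < b" "\<And>n. 0 < t n" "t \<longlonglongrightarrow> 0"
  shows "(\<lambda>n. ((1 - t n)*a + t n*b) * (ln ((1 - t n)*a + t n*b) - ln a) / t n) \<longlonglongrightarrow> b - a"
proof -
  define F where "F s = ((1-s)*a + s*b) * (ln ((1-s)*a + s*b) - ln a)" for s
  have d: "(F has_real_derivative (b - a)) (at 0)"
  proof -
    have "(F has_real_derivative ((b - a) * (ln ((1-0)*a + 0*b) - ln a) + ((1-0)*a + 0*b) * ((b - a) / ((1-0)*a + 0*b)))) (at 0)"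
      unfolding F_def using assms
      by (auto intro!: derivative_eq_intros)
    then show ?thesis using assms by simp
  qed
  then have "((\<lambda>h. (F (0 + h) - F 0) / h) \<longlongrightarrow> b - a) (at 0)" using DERIV_def by blast
  moreover have "filterlim t (at 0) sequentially"
    unfolding filterlim_at using assms(3,4) less_imp_neq[OF assms(3)] by (auto intro!: always_eventually)
  ultimately have "(\<lambda>n. (F (0 + t n) - F 0) / t n) \<longlonglongrightarrow> b - a"
    by (rule filterlim_compose)
  then show ?thesis unfolding F_def by simp
qed

lemma deriv_le:
  assumes q: "0 < q" and g0: "GP q \<mu>0" and g1: "GP q \<mu>" and e: "0 < \<epsilon>" "\<epsilon> \<le> 1"
    and opt: "\<And>t. 0 < t \<Longrightarrow> t \<le> \<epsilon> \<Longrightarrow> J \<mu>0 \<mu>0 \<le> J (mix t \<mu>0 \<mu>) (mix t \<mu>0 \<mu>)"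
  shows "J \<mu>0 \<mu>0 \<le> J \<mu> \<mu>0"
proof -
  have r0: "real_prob \<mu>0" "integrable \<mu>0 (\<lambda>x. x\<^sup>2)" "q \<le> measure \<mu>0 {0}" using g0 GP_def by auto
  have r1: "real_prob \<mu>" "integrable \<mu> (\<lambda>x. x\<^sup>2)" "q \<le> measure \<mu> {0}" using g1 GP_def by auto
  define p0 where "p0 y = pY y \<mu>0" for y
  define p1 where "p1 y = pY y \<mu>" for y
  have p0: "\<And>y. p0 y > 0" unfolding p0_def using pY_pos r0 q by blast
  have p1: "\<And>y. p1 y > 0" unfolding p1_def using pY_pos r1 q by blast
  have [measurable]: "p0 \<in> borel_measurable borel" "p1 \<in> borel_measurable borel"
    unfolding p0_def[abs_def] p1_def[abs_def] using pY_meas r0 r1 by auto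
  define tn where "tn n = \<epsilon> / real (Suc n)" for n
  have tn: "\<And>n. 0 < tn n" "\<And>n. tn n \<le> \<epsilon>" unfolding tn_def using e
    by (auto simp: divide_simps)
  have tn0: "tn \<longlonglongrightarrow> 0" unfolding tn_def
    by (intro tendsto_divide_0[OF tendsto_const] filterlim_at_top_imp_at_infinity filterlim_real_sequentially[THEN filterlim_compose] filterlim_Suc)
  define s where "s n y = ((1 - tn n) * p0 y + tn n * p1 y) * (ln ((1 - tn n) * p0 y + tn n * p1 y) - ln (p0 y)) / tn n" for n y
  have key: "J \<mu>0 \<mu>0 - J \<mu> \<mu>0 \<le> (\<integral>y. s n y \<partial>lborel)" for n
  proof -
    define t where "t = tn n"
    have t: "0 < t" "t \<le> 1" "t \<le> \<epsilon>" using tn e unfolding t_def by (auto intro: order_trans)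
    define mt where "mt = mix t \<mu>0 \<mu>"
    have gt: "GP q mt" unfolding mt_def using GP_mix[OF g0 g1] t by auto
    then have rt: "real_prob mt" "integrable mt (\<lambda>x. x\<^sup>2)" "q \<le> measure mt {0}" using GP_def by auto
    have pt: "pY y mt = (1 - t) * p0 y + t * p1 y" for y
      unfolding mt_def p0_def p1_def using pY_mix r0(1) r1(1) t by simp
    have i1: "integrable lborel (\<lambda>y. pY y mt * ln (pY y mt))" using J_int[OF rt(1,2) rt(1,3) q] .
    have i2: "integrable lborel (\<lambda>y. pY y mt * ln (pY y \<mu>0))" using J_int[OF rt(1,2) r0(1,3) q] .
    have i3: "integrable lborel (\<lambda>y. p0 y * ln (p0 y))" using J_int[OF r0(1,2) r0(1,3) q] unfolding p0_def .
    have i4: "integrable lborel (\<lambda>y. p1 y * ln (p0 y))" using J_int[OF r1(1,2) r0(1,3) q] unfolding p0_def p1_def .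
    have Jt0: "J mt \<mu>0 = (1 - t) * J \<mu>0 \<mu>0 + t * J \<mu> \<mu>0"
    proof -
      have "J mt \<mu>0 = (\<integral>y. (1 - t) * (p0 y * ln (p0 y)) + t * (p1 y * ln (p0 y)) \<partial>lborel)"
        unfolding J_def pt p0_def[symmetric] by (rule Bochner_Integration.integral_cong) (auto simp: algebra_simps)
      also have "\<dots> = (1 - t) * J \<mu>0 \<mu>0 + t * J \<mu> \<mu>0"
        using i3 i4 unfolding J_def p0_def[symmetric] p1_def[symmetric] by simp
      finally show ?thesis .
    qed
    have D: "J mt mt - J mt \<mu>0 = t * (\<integral>y. s n y \<partial>lborel)"
    proof -
      have "J mt mt - J mt \<mu>0 = (\<integral>y. pY y mt * ln (pY y mt) - pY y mt * ln (pY y \<mu>0) \<partial>lborel)"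
        unfolding J_def using i1 i2 by simp
      also have "\<dots> = (\<integral>y. t * s n y \<partial>lborel)"
        unfolding s_def t_def[symmetric] pt p0_def[symmetric] using t
        by (intro Bochner_Integration.integral_cong) (use t in \<open>simp_all add: right_diff_distrib[symmetric]\<close>)
      also have "\<dots> = t * (\<integral>y. s n y \<partial>lborel)" by simp
      finally show ?thesis .
    qed
    have "J \<mu>0 \<mu>0 \<le> J mt mt" unfolding mt_def using opt t by auto
    then have "t * (J \<mu>0 \<mu>0 - J \<mu> \<mu>0) \<le> t * (\<integral>y. s n y \<partial>lborel)"
      using Jt0 D by (simp add: algebra_simps)
    then show ?thesis using t by simp
  qed
  have lim: "(\<lambda>n. \<integral>y. s n y \<partial>lborel) \<longlonglongrightarrow> (\<integral>y. p1 y - p0 y \<partial>lborel)"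
  proof (rule integral_dominated_convergence[where w="\<lambda>y. \<bar>p1 y - p0 y\<bar> + \<bar>p1 y * (ln (p1 y) - ln (p0 y))\<bar>"])
    show "(\<lambda>y. p1 y - p0 y) \<in> borel_measurable lborel" by measurable
    show "\<And>n. s n \<in> borel_measurable lborel" unfolding s_def[abs_def] by measurable
    have i3: "integrable lborel (\<lambda>y. p1 y * ln (p1 y))" using J_int[OF r1(1,2) r1(1,3) q] unfolding p1_def .
    have i4: "integrable lborel (\<lambda>y. p1 y * ln (p0 y))" using J_int[OF r1(1,2) r0(1,3) q] unfolding p0_def p1_def .
    have i5: "integrable lborel p0" "integrable lborel p1" using pY_total(1)[OF r0(1,2)] pY_total(1)[OF r1(1,2)]
      unfolding p0_def[abs_def] p1_def[abs_def] by auto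
    have "integrable lborel (\<lambda>y. p1 y * ln (p1 y) - p1 y * ln (p0 y))" using i3 i4 by simp
    then have "integrable lborel (\<lambda>y. p1 y * (ln (p1 y) - ln (p0 y)))" by (simp add: right_diff_distrib)
    then show "integrable lborel (\<lambda>y. \<bar>p1 y - p0 y\<bar> + \<bar>p1 y * (ln (p1 y) - ln (p0 y))\<bar>)"
      using i5 by (intro Bochner_Integration.integrable_add integrable_abs) auto
    show "AE y in lborel. (\<lambda>n. s n y) \<longlonglongrightarrow> p1 y - p0 y"
      unfolding s_def using L3[OF p0 p1 tn(1) tn0] by simp
    show "AE y in lborel. norm (s n y) \<le> \<bar>p1 y - p0 y\<bar> + \<bar>p1 y * (ln (p1 y) - ln (p0 y))\<bar>" for n
    proof (intro AE_I2)
      fix y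
      have t: "0 < tn n" "tn n \<le> 1" using tn e by (auto intro: order_trans)
      have lo: "tn n * (p1 y - p0 y) \<le> tn n * s n y" unfolding s_def using L1[OF p0 p1, of "tn n"] t by simp
      have hi: "tn n * s n y \<le> tn n * (p1 y * (ln (p1 y) - ln (p0 y)))" unfolding s_def using L2[OF p0 p1, of "tn n"] t by simp
      have "p1 y - p0 y \<le> s n y" "s n y \<le> p1 y * (ln (p1 y) - ln (p0 y))"
        using lo hi t by (simp_all add: mult_le_cancel_left_pos)
      then show "norm (s n y) \<le> \<bar>p1 y - p0 y\<bar> + \<bar>p1 y * (ln (p1 y) - ln (p0 y))\<bar>" by simp
    qed
  qed
  moreover have "(\<integral>y. p1 y - p0 y \<partial>lborel) = 0"
    using pY_total[OF r0(1,2)] pY_total[OF r1(1,2)] unfolding p0_def[abs_def] p1_def[abs_def] by simp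
  ultimately have "J \<mu>0 \<mu>0 - J \<mu> \<mu>0 \<le> 0" using key by (intro LIMSEQ_le_const) auto
  then show ?thesis by simp
qed



lemma Ifun_eq: "0 < q \<Longrightarrow> GP q \<mu> \<Longrightarrow> Ifun \<mu> = H0 - J \<mu> \<mu>"
  unfolding Ifun_def GP_def using dfun_int(2)[of \<mu> \<mu> q] by auto

lemma int_f:
  assumes q: "0 < q" and g: "GP q \<mu>" "GP q \<mu>0"
  shows "(\<integral>x. f_lam lam \<gamma> x \<mu>0 \<partial>\<mu>) = (J \<mu>0 \<mu>0 - J \<mu> \<mu>0) - lam * ((\<integral>x. x\<^sup>2 \<partial>\<mu>) - \<gamma>)"
proof -
  have r: "real_prob \<mu>" "integrable \<mu> (\<lambda>x. x\<^sup>2)" "real_prob \<mu>0" "q \<le> measure \<mu>0 {0}" using g GP_def by auto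
  interpret prob_space \<mu> using r rp_prob by blast
  note d = dfun_int[OF r(1,2) r(3,4) q]
  have "(\<integral>x. f_lam lam \<gamma> x \<mu>0 \<partial>\<mu>) = (\<integral>x. dfun x \<mu>0 - Ifun \<mu>0 - lam * (x\<^sup>2 - \<gamma>) \<partial>\<mu>)"
    unfolding f_lam_def ..
  also have "\<dots> = (\<integral>x. dfun x \<mu>0 \<partial>\<mu>) - Ifun \<mu>0 - lam * ((\<integral>x. x\<^sup>2 \<partial>\<mu>) - \<gamma>)"
    using d(1) r(2) prob_space by simp
  also have "\<dots> = (J \<mu>0 \<mu>0 - J \<mu> \<mu>0) - lam * ((\<integral>x. x\<^sup>2 \<partial>\<mu>) - \<gamma>)"
    using d(2) Ifun_eq[OF q g(2)] by simp
  finally show ?thesis .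
qed

lemma J_mix1:
  assumes q: "0 < q" and g: "GP q \<mu>1" "GP q \<mu>2" "GP q \<nu>" and s: "0 \<le> s" "s \<le> 1"
  shows "J (mix s \<mu>1 \<mu>2) \<nu> = (1 - s) * J \<mu>1 \<nu> + s * J \<mu>2 \<nu>"
proof -
  have r: "real_prob \<mu>1" "integrable \<mu>1 (\<lambda>x. x\<^sup>2)" "real_prob \<mu>2" "integrable \<mu>2 (\<lambda>x. x\<^sup>2)"
     "real_prob \<nu>" "q \<le> measure \<nu> {0}" using g GP_def by auto
  have i1: "integrable lborel (\<lambda>y. pY y \<mu>1 * ln (pY y \<nu>))" using J_int[OF r(1,2) r(5,6) q] .
  have i2: "integrable lborel (\<lambda>y. pY y \<mu>2 * ln (pY y \<nu>))" using J_int[OF r(3,4) r(5,6) q] .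
  have "J (mix s \<mu>1 \<mu>2) \<nu> = (\<integral>y. (1 - s) * (pY y \<mu>1 * ln (pY y \<nu>)) + s * (pY y \<mu>2 * ln (pY y \<nu>)) \<partial>lborel)"
    unfolding J_def pY_mix[OF r(1) r(3) s]
    by (intro Bochner_Integration.integral_cong) (auto simp: algebra_simps)
  also have "\<dots> = (1 - s) * J \<mu>1 \<nu> + s * J \<mu>2 \<nu>"
    using i1 i2 unfolding J_def by simp
  finally show ?thesis .
qed



theorem lemma5:
  fixes \<gamma> q :: real and \<mu>0 :: "real measure"
  assumes "\<gamma> > 0" and "0 < q" and "q < 1"
    and "\<mu>0 \<in> Lambda \<gamma> q"
  shows "(\<forall>\<mu>\<in>Lambda \<gamma> q. Ifun \<mu> \<le> Ifun \<mu>0) \<longleftrightarrow>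
         (\<exists>lam::real. lam \<ge> 0 \<and> lam * (\<integral>x. x\<^sup>2 - \<gamma> \<partial>\<mu>0) = 0 \<and>
                 (\<forall>\<mu>\<in>Lambda_q q. (\<integral>x. f_lam lam \<gamma> x \<mu>0 \<partial>\<mu>) \<le> 0))"
proof -
  have gam: "0 \<le> \<gamma>" using assms(1) by simp
  have q: "0 < q" by fact
  have g0: "GP q \<mu>0" and E0: "(\<integral>x. x\<^sup>2 \<partial>\<mu>0) \<le> \<gamma>" using assms(4) Lambda_GP[OF gam] by auto
  interpret p0: prob_space \<mu>0 using g0 GP_def rp_prob by blast
  have ig: "(\<integral>x. x\<^sup>2 - \<gamma> \<partial>\<mu>0) = (\<integral>x. x\<^sup>2 \<partial>\<mu>0) - \<gamma>"
    using g0 GP_def p0.prob_space by simp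
  define a where "a \<mu> = J \<mu>0 \<mu>0 - J \<mu> \<mu>0" for \<mu>
  define g where "g \<mu> = (\<integral>x. x\<^sup>2 \<partial>\<mu>) - \<gamma>" for \<mu>
  have intf: "\<And>\<mu> lam. GP q \<mu> \<Longrightarrow> (\<integral>x. f_lam lam \<gamma> x \<mu>0 \<partial>\<mu>) = a \<mu> - lam * g \<mu>"
    unfolding a_def g_def using int_f[OF q _ g0] by blast
  have Lq: "\<And>\<mu>. \<mu> \<in> Lambda_q q \<longleftrightarrow> GP q \<mu>" using Lambda_q_GP by blast
  show ?thesis
  proof
    assume opt: "\<forall>\<mu>\<in>Lambda \<gamma> q. Ifun \<mu> \<le> Ifun \<mu>0"
    have gmix: "g (mix t \<mu>0 \<mu>) = (1 - t) * g \<mu>0 + t * g \<mu>" if "GP q \<mu>" "0 \<le> t" "t \<le> 1" for \<mu> t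
      unfolding g_def using int_x2_mix[OF g0 that] by (simp add: algebra_simps)
    have feas: "a \<mu> \<le> 0" if gm: "GP q \<mu>" and e: "0 < \<epsilon>" "\<epsilon> \<le> 1"
      and gt: "\<And>t. 0 < t \<Longrightarrow> t \<le> \<epsilon> \<Longrightarrow> g (mix t \<mu>0 \<mu>) \<le> 0" for \<mu> \<epsilon>
    proof -
      have "J \<mu>0 \<mu>0 \<le> J \<mu> \<mu>0"
      proof (rule deriv_le[OF q g0 gm e])
        fix t assume t: "0 < t" "t \<le> \<epsilon>"
        then have t1: "t \<le> 1" using e by simp
        have gt': "GP q (mix t \<mu>0 \<mu>)" using GP_mix[OF g0 gm] t t1 by simp
        have "mix t \<mu>0 \<mu> \<in> Lambda \<gamma> q" using Lambda_GP[OF gam] gt' gt[OF t] unfolding g_def by simp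
        then have "Ifun (mix t \<mu>0 \<mu>) \<le> Ifun \<mu>0" using opt by blast
        then show "J \<mu>0 \<mu>0 \<le> J (mix t \<mu>0 \<mu>) (mix t \<mu>0 \<mu>)"
          using Ifun_eq[OF q gt'] Ifun_eq[OF q g0] by simp
      qed
      then show ?thesis unfolding a_def by simp
    qed
    have g0le: "g \<mu>0 \<le> 0" unfolding g_def using E0 by simp
    have negfeas: "a \<mu> \<le> 0" if "GP q \<mu>" "g \<mu> \<le> 0" for \<mu>
    proof (rule feas[OF that(1), of 1])
      fix t :: real assume "0 < t" "t \<le> 1"
      then show "g (mix t \<mu>0 \<mu>) \<le> 0" using gmix[OF that(1), of t] g0le that(2)
        by (smt (verit) mult_nonneg_nonneg mult_nonneg_nonpos)
    qed auto
    show "\<exists>lam::real. lam \<ge> 0 \<and> lam * (\<integral>x. x\<^sup>2 - \<gamma> \<partial>\<mu>0) = 0 \<and>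
                 (\<forall>\<mu>\<in>Lambda_q q. (\<integral>x. f_lam lam \<gamma> x \<mu>0 \<partial>\<mu>) \<le> 0)"
    proof (cases "g \<mu>0 < 0")
      case True
      have "a \<mu> \<le> 0" if gm: "GP q \<mu>" for \<mu>
      proof -
        define \<epsilon> where "\<epsilon> = - g \<mu>0 / (\<bar>g \<mu>\<bar> - g \<mu>0)"
        have den: "\<bar>g \<mu>\<bar> - g \<mu>0 > 0" using True by simp
        have e: "0 < \<epsilon>" "\<epsilon> \<le> 1" unfolding \<epsilon>_def using True den by (auto simp: divide_simps)
        show ?thesis
        proof (rule feas[OF gm e])
          fix t assume t: "0 < t" "t \<le> \<epsilon>"
          have "t * (\<bar>g \<mu>\<bar> - g \<mu>0) \<le> \<epsilon> * (\<bar>g \<mu>\<bar> - g \<mu>0)" using t den by (simp add: mult_right_mono)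
          also have "\<dots> = - g \<mu>0" unfolding \<epsilon>_def using den by simp
          finally have "t * (\<bar>g \<mu>\<bar> - g \<mu>0) \<le> - g \<mu>0" .
          moreover have "t * g \<mu> \<le> t * \<bar>g \<mu>\<bar>" using t by (simp add: mult_left_mono)
          moreover have "g (mix t \<mu>0 \<mu>) = g \<mu>0 - t * g \<mu>0 + t * g \<mu>"
            using gmix[OF gm, of t] t e by (simp add: algebra_simps)
          ultimately show "g (mix t \<mu>0 \<mu>) \<le> 0" by (simp add: right_diff_distrib)
        qed
      qed
      then show ?thesis using intf Lq by (intro exI[of _ 0]) auto
    next
      case False
      then have gz: "g \<mu>0 = 0" using g0le by simp
      define \<delta> where "\<delta> = return borel (0::real)"
      have gd: "GP q \<delta>" "g \<delta> = - \<gamma>" unfolding \<delta>_def g_def using GP_delta assms(3) by auto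
      have ratio: "a \<mu>1 / g \<mu>1 \<le> a \<mu>2 / g \<mu>2" if g1: "GP q \<mu>1" "g \<mu>1 > 0" and g2: "GP q \<mu>2" "g \<mu>2 < 0" for \<mu>1 \<mu>2
      proof -
        define s where "s = g \<mu>1 / (g \<mu>1 - g \<mu>2)"
        have s: "0 \<le> s" "s \<le> 1" unfolding s_def using g1 g2 by (auto simp: divide_simps)
        define \<nu> where "\<nu> = mix s \<mu>1 \<mu>2"
        have gn: "GP q \<nu>" unfolding \<nu>_def using GP_mix[OF g1(1) g2(1) s] .
        have "g \<nu> = (1 - s) * g \<mu>1 + s * g \<mu>2"
          unfolding g_def \<nu>_def using int_x2_mix[OF g1(1) g2(1) s] by (simp add: algebra_simps)
        also have "\<dots> = 0" unfolding s_def using g1 g2 by (simp add: field_simps)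
        finally have "g \<nu> \<le> 0" by simp
        then have an: "a \<nu> \<le> 0" using negfeas gn by blast
        have "a \<nu> = (1 - s) * a \<mu>1 + s * a \<mu>2"
          unfolding a_def \<nu>_def using J_mix1[OF q g1(1) g2(1) g0 s] by (simp add: algebra_simps)
        then have "(1 - s) * a \<mu>1 + s * a \<mu>2 \<le> 0" using an by simp
        then have "(g \<mu>1 - g \<mu>2) * ((1 - s) * a \<mu>1 + s * a \<mu>2) \<le> 0"
          using g1 g2 by (simp add: mult_nonneg_nonpos)
        moreover have "(g \<mu>1 - g \<mu>2) * ((1 - s) * a \<mu>1 + s * a \<mu>2) = - g \<mu>2 * a \<mu>1 + g \<mu>1 * a \<mu>2"
        proof -
          have dn: "g \<mu>1 - g \<mu>2 \<noteq> 0" using g1 g2 by simp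
          have e1: "(g \<mu>1 - g \<mu>2) * (1 - s) = - g \<mu>2" unfolding s_def using dn by (simp add: field_simps)
          have e2: "(g \<mu>1 - g \<mu>2) * s = g \<mu>1" unfolding s_def using dn by (simp add: field_simps)
          have "(g \<mu>1 - g \<mu>2) * ((1 - s) * a \<mu>1 + s * a \<mu>2) = ((g \<mu>1 - g \<mu>2) * (1 - s)) * a \<mu>1 + ((g \<mu>1 - g \<mu>2) * s) * a \<mu>2"
            by (simp add: algebra_simps)
          then show ?thesis unfolding e1 e2 by simp
        qed
        ultimately have "- g \<mu>2 * a \<mu>1 \<le> - g \<mu>1 * a \<mu>2" by simp
        then show ?thesis using g1 g2 by (simp add: divide_simps mult.commute) 
      qed
      define S where "S = insert 0 {a \<mu> / g \<mu> | \<mu>. GP q \<mu> \<and> g \<mu> > 0}"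
      define lam where "lam = Sup S"
      have bdd: "bdd_above S" unfolding S_def bdd_above_def
        using ratio[OF _ _ gd(1)] gd(2) assms(1)
        by (intro exI[of _ "max 0 (a \<delta> / g \<delta>)"]) (auto intro: order_trans[OF _ max.cobounded2])
      have lam0: "lam \<ge> 0" unfolding lam_def using bdd by (intro cSup_upper) (auto simp: S_def)
      have "a \<mu> \<le> lam * g \<mu>" if gm: "GP q \<mu>" for \<mu>
      proof (cases "g \<mu> > 0")
        case True
        then have "a \<mu> / g \<mu> \<le> lam" unfolding lam_def using bdd gm
          by (intro cSup_upper) (auto simp: S_def)
        then show ?thesis using True by (simp add: divide_simps)
      next
        case False
        show ?thesis
        proof (cases "g \<mu> = 0")
          case True then show ?thesis using negfeas gm by simp
        next
          case False2: False
          then have gn: "g \<mu> < 0" using False by simp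
          have an: "a \<mu> \<le> 0" using negfeas gm gn by simp
          have "lam \<le> a \<mu> / g \<mu>" unfolding lam_def
          proof (rule cSup_least)
            show "S \<noteq> {}" unfolding S_def by simp
            fix x assume "x \<in> S"
            then have "x = 0 \<or> (\<exists>\<mu>'. GP q \<mu>' \<and> g \<mu>' > 0 \<and> x = a \<mu>' / g \<mu>')" unfolding S_def by auto
            then show "x \<le> a \<mu> / g \<mu>"
            proof
              assume "x = 0" then show ?thesis using an gn by (simp add: divide_nonpos_neg)
            next
              assume "\<exists>\<mu>'. GP q \<mu>' \<and> g \<mu>' > 0 \<and> x = a \<mu>' / g \<mu>'"
              then show ?thesis using ratio[OF _ _ gm gn] by auto
            qed
          qed
          then show ?thesis using gn by (simp add: divide_simps mult.commute)
        qed
      qed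
      then show ?thesis using intf Lq lam0 gz ig unfolding g_def
        by (intro exI[of _ lam]) auto
    qed
  next
    assume "\<exists>lam::real. lam \<ge> 0 \<and> lam * (\<integral>x. x\<^sup>2 - \<gamma> \<partial>\<mu>0) = 0 \<and>
                 (\<forall>\<mu>\<in>Lambda_q q. (\<integral>x. f_lam lam \<gamma> x \<mu>0 \<partial>\<mu>) \<le> 0)"
    then obtain lam where lam: "lam \<ge> 0" "\<forall>\<mu>\<in>Lambda_q q. (\<integral>x. f_lam lam \<gamma> x \<mu>0 \<partial>\<mu>) \<le> 0" by blast
    show "\<forall>\<mu>\<in>Lambda \<gamma> q. Ifun \<mu> \<le> Ifun \<mu>0"
    proof
      fix \<mu> assume "\<mu> \<in> Lambda \<gamma> q"
      then have gm: "GP q \<mu>" and Em: "g \<mu> \<le> 0" using Lambda_GP[OF gam] unfolding g_def by auto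
      have "a \<mu> - lam * g \<mu> \<le> 0" using lam(2) Lq gm intf by auto
      moreover have "lam * g \<mu> \<le> 0" using lam(1) Em by (simp add: mult_nonneg_nonpos)
      ultimately have "a \<mu> \<le> 0" by simp
      moreover have "J \<mu> \<mu>0 \<le> J \<mu> \<mu>" using KL[OF gm g0 q] .
      ultimately show "Ifun \<mu> \<le> Ifun \<mu>0" using Ifun_eq[OF q gm] Ifun_eq[OF q g0] unfolding a_def by simp
    qed
  qed
qed


end
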